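(* $\mathsf d\otimes\mathsf I\mathrel{;}\mathsf I\otimes\mathsf e\ \sim\ \mathsf I\ \sim\ \mathsf I\otimes\mathsf d\mathrel{;}\mathsf e\otimes\mathsf I$, where $\otimes$ binds tighter than $;$.
   Context: Wire calculus. Fix a set $\Sigma$ of signals and $\iota\notin\Sigma$; $L=\Sigma\cup\{\iota\}$; $\vec\iota$ denotes a word of $\iota$'s. Prefix strings are words over atoms: signal variables $x$, binders $\lambda x$, $\iota$, constants $\sigma\in\Sigma$. Terms: $P::= Y \mid P\mathrel{;}P\mid P\otimes P\mid \frac{u}{v}.P\mid P+P\mid \mu Y{:}\tau.P$ ($\tau$ a sort $(k,l)$). In $\frac{u}{v}.P$, variables $x$ with $\lambda x$ in $uv$ are bound (set $bd$). Sorting: $P:(k,n),R:(n,l)\Rightarrow P\mathrel{;}R:(k,l)$; $P:(k,l),Q:(m,n)\Rightarrow P\otimes Q:(k+m,l+n)$; $\frac{u}{v}.P:(|u|,|v|)$ when $P$ has that sort; $\mu Y{:}\tau.P:\tau$; $P+Q:\tau$ for $P,Q:\tau$. Closed terms only. Transitions $P\xrightarrow[\vec b]{\vec a}Q$ are generated by: (Refl) $P\xrightarrow[\vec\iota]{\vec\iota}P$; ($\iota$L) $P\xrightarrow[\vec\iota]{\vec\iota}R\xrightarrow[\vec b]{\vec a}Q$ gives $P\xrightarrow[\vec b]{\vec a}Q$; ($\iota$R) $P\xrightarrow[\vec b]{\vec a}R\xrightarrow[\vec\iota]{\vec\iota}Q$ gives $P\xrightarrow[\vec b]{\vec a}Q$;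 (Cut) $P\xrightarrow[\vec c]{\vec a}Q$, $R\xrightarrow[\vec b]{\vec c}S$ give $P\mathrel{;}R\xrightarrow[\vec b]{\vec a}Q\mathrel{;}S$; (Ten) $P\xrightarrow[\vec b]{\vec a}Q$, $R\xrightarrow[\vec d]{\vec c}S$ give $P\otimes R\xrightarrow[\vec b\vec d]{\vec a\vec c}Q\otimes S$; (Pref) for each $\sigma:bd\to L$, $\frac{u}{v}.P\xrightarrow[v|_\sigma]{u|_\sigma}P|_\sigma$; (Rec) $P[\mu Y.P/Y]\xrightarrow[\vec b]{\vec a}Q$ gives $\mu Y.P\xrightarrow[\vec b]{\vec a}Q$; ($+\iota$) and ($+$L/R) as in CSP external choice (choice resolved only by a transition whose labels are not all $\iota$). Bisimilarity $\sim$: $P\sim Q$ iff some relation $S\ni(P,Q)$ satisfies: if $(P',Q')\in S$ and $P'\xrightarrow[\vec b]{\vec a}P''$ then $Q'\xrightarrow[\vec b]{\vec a}Q''$ with $(P'',Q'')\in S$, and symmetrically. Constants: $\mathsf I=\mu Y.\frac{\lambda x}{\lambda x}.Y:(1,1)$ (transitions $\mathsf I\xrightarrow[a]{a}\mathsf I$ for $a\in L$); $\mathsf d=\mu Y.\frac{\epsilon}{\lambda x\lambda x}.Y:(0,2)$ (transitions $\mathsf d\xrightarrow[aa]{}\mathsf d$); $\mathsf e=\mu Y.\frac{\lambda x\lambda x}{\epsilon}.Y:(2,0)$ (transitions $\mathsf e\xrightarrow[]{aa}\mathsf e$), $\epsilon$ the empty string. *)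

theory Defs
  imports Main
begin

text \<open>Signals form the type 's (the set Sigma); the label set
L = Sigma + {iota} is rendered as 's option, with None = iota and Some c = c.
Signal variables and recursion variables are both named by natural numbers
(separate namespaces).\<close>

type_synonym 's lab = "'s option"

datatype 's atom = AVar nat | ALam nat | AIota | AConst 's

datatype 's wterm =
    TVar nat
  | Seq "'s wterm" "'s wterm"
  | Ten "'s wterm" "'s wterm"
  | Pref "'s atom list" "'s atom list" "'s wterm"
  | Plus "'s wterm" "'s wterm"
  | Mu nat "nat \<times> nat" "'s wterm"

definition bd :: "'s atom list \<Rightarrow> 's atom list \<Rightarrow> nat set" where
  "bd u v = {x. ALam x \<in> set (u @ v)}"

definition atom_of_lab :: "'s lab \<Rightarrow> 's atom" where
  "atom_of_lab a = (case a of None \<Rightarrow> AIota | Some c \<Rightarrow> AConst c)"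

fun lab_of :: "(nat \<Rightarrow> 's lab) \<Rightarrow> 's atom \<Rightarrow> 's lab" where
  "lab_of \<sigma> (AVar x) = \<sigma> x"
| "lab_of \<sigma> (ALam x) = \<sigma> x"
| "lab_of \<sigma> AIota = None"
| "lab_of \<sigma> (AConst c) = Some c"

fun subst_atom :: "nat set \<Rightarrow> (nat \<Rightarrow> 's lab) \<Rightarrow> 's atom \<Rightarrow> 's atom" where
  "subst_atom B \<sigma> (AVar x) = (if x \<in> B then atom_of_lab (\<sigma> x) else AVar x)"
| "subst_atom B \<sigma> a = a"

fun subst :: "nat set \<Rightarrow> (nat \<Rightarrow> 's lab) \<Rightarrow> 's wterm \<Rightarrow> 's wterm" where
  "subst B \<sigma> (TVar Y) = TVar Y"
| "subst B \<sigma> (Seq P R) = Seq (subst B \<sigma> P) (subst B \<sigma> R)"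
| "subst B \<sigma> (Ten P R) = Ten (subst B \<sigma> P) (subst B \<sigma> R)"
| "subst B \<sigma> (Pref u v P) =
     (let B' = B - bd u v in
      Pref (map (subst_atom B' \<sigma>) u) (map (subst_atom B' \<sigma>) v) (subst B' \<sigma> P))"
| "subst B \<sigma> (Plus P R) = Plus (subst B \<sigma> P) (subst B \<sigma> R)"
| "subst B \<sigma> (Mu Y \<tau> P) = Mu Y \<tau> (subst B \<sigma> P)"

fun substY :: "nat \<Rightarrow> 's wterm \<Rightarrow> 's wterm \<Rightarrow> 's wterm" where
  "substY Y R (TVar Z) = (if Z = Y then R else TVar Z)"
| "substY Y R (Seq P Q) = Seq (substY Y R P) (substY Y R Q)"
| "substY Y R (Ten P Q) = Ten (substY Y R P) (substY Y R Q)"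
| "substY Y R (Pref u v P) = Pref u v (substY Y R P)"
| "substY Y R (Plus P Q) = Plus (substY Y R P) (substY Y R Q)"
| "substY Y R (Mu Z \<tau> P) = (if Z = Y then Mu Z \<tau> P else Mu Z \<tau> (substY Y R P))"

fun sortof :: "(nat \<Rightarrow> (nat \<times> nat) option) \<Rightarrow> 's wterm \<Rightarrow> (nat \<times> nat) option" where
  "sortof \<Gamma> (TVar Y) = \<Gamma> Y"
| "sortof \<Gamma> (Seq P R) =
     (case (sortof \<Gamma> P, sortof \<Gamma> R) of
        (Some (k, n), Some (n', l)) \<Rightarrow> if n = n' then Some (k, l) else None
      | _ \<Rightarrow> None)"
| "sortof \<Gamma> (Ten P R) =
     (case (sortof \<Gamma> P, sortof \<Gamma> R) of
        (Some (k, l), Some (m, n)) \<Rightarrow> Some (k + m, l + n)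
      | _ \<Rightarrow> None)"
| "sortof \<Gamma> (Pref u v P) =
     (if sortof \<Gamma> P = Some (length u, length v) then Some (length u, length v) else None)"
| "sortof \<Gamma> (Plus P R) =
     (if sortof \<Gamma> P = sortof \<Gamma> R then sortof \<Gamma> P else None)"
| "sortof \<Gamma> (Mu Y \<tau> P) =
     (if sortof (\<Gamma>(Y \<mapsto> \<tau>)) P = Some \<tau> then Some \<tau> else None)"

definition all_iota :: "'s lab list \<Rightarrow> bool" where
  "all_iota w \<longleftrightarrow> (\<forall>a \<in> set w. a = None)"

text \<open>wtrans P a b Q  means  P --a/b--> Q, with a the upper (left boundary) label
and b the lower (right boundary) label.\<close>
inductive wtrans :: "'s wterm \<Rightarrow> 's lab list \<Rightarrow> 's lab list \<Rightarrow> 's wterm \<Rightarrow> bool" where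
  Refl: "sortof Map.empty P = Some (k, l) \<Longrightarrow>
           wtrans P (replicate k None) (replicate l None) P"
| IotaL: "wtrans P a0 b0 R \<Longrightarrow> all_iota a0 \<Longrightarrow> all_iota b0 \<Longrightarrow> wtrans R a b Q \<Longrightarrow>
           wtrans P a b Q"
| IotaR: "wtrans P a b R \<Longrightarrow> wtrans R a0 b0 Q \<Longrightarrow> all_iota a0 \<Longrightarrow> all_iota b0 \<Longrightarrow>
           wtrans P a b Q"
| Cut: "wtrans P a c Q \<Longrightarrow> wtrans R c b S \<Longrightarrow> wtrans (Seq P R) a b (Seq Q S)"
| Ten: "wtrans P a b Q \<Longrightarrow> wtrans R c d S \<Longrightarrow> wtrans (Ten P R) (a @ c) (b @ d) (Ten Q S)"
| Pref: "wtrans (Pref u v P) (map (lab_of \<sigma>) u) (map (lab_of \<sigma>) v) (subst (bd u v) \<sigma> P)"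
| Rec: "wtrans (substY Y (Mu Y \<tau> P) P) a b Q \<Longrightarrow> wtrans (Mu Y \<tau> P) a b Q"
| PlusIota: "wtrans P a b P' \<Longrightarrow> wtrans Q a b Q' \<Longrightarrow> all_iota a \<Longrightarrow> all_iota b \<Longrightarrow>
           wtrans (Plus P Q) a b (Plus P' Q')"
| PlusL: "wtrans P a b P' \<Longrightarrow> \<not> all_iota (a @ b) \<Longrightarrow> wtrans (Plus P Q) a b P'"
| PlusR: "wtrans Q a b Q' \<Longrightarrow> \<not> all_iota (a @ b) \<Longrightarrow> wtrans (Plus P Q) a b Q'"

definition is_bisim :: "('s wterm \<times> 's wterm) set \<Rightarrow> bool" where
  "is_bisim S \<longleftrightarrow>
     (\<forall>P Q. (P, Q) \<in> S \<longrightarrow>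
        (\<forall>a b P'. wtrans P a b P' \<longrightarrow> (\<exists>Q'. wtrans Q a b Q' \<and> (P', Q') \<in> S)) \<and>
        (\<forall>a b Q'. wtrans Q a b Q' \<longrightarrow> (\<exists>P'. wtrans P a b P' \<and> (P', Q') \<in> S)))"

definition bisimilar :: "'s wterm \<Rightarrow> 's wterm \<Rightarrow> bool" (infix "\<approx>w" 50) where
  "P \<approx>w Q \<longleftrightarrow> (\<exists>S. is_bisim S \<and> (P, Q) \<in> S)"

definition wI :: "'s wterm" where
  "wI = Mu 0 (1, 1) (Pref [ALam 0] [ALam 0] (TVar 0))"

definition wd :: "'s wterm" where
  "wd = Mu 0 (0, 2) (Pref [] [ALam 0, ALam 0] (TVar 0))"

definition we :: "'s wterm" where
  "we = Mu 0 (2, 0) (Pref [ALam 0, ALam 0] [] (TVar 0))"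

end

theory Submission
  imports Defs
begin

definition pI :: "'s wterm" where "pI = Pref [ALam 0] [ALam 0] wI"
definition pd :: "'s wterm" where "pd = Pref [] [ALam 0, ALam 0] wd"
definition pe :: "'s wterm" where "pe = Pref [ALam 0, ALam 0] [] we"

definition SI :: "'s wterm \<Rightarrow> bool" where "SI P \<longleftrightarrow> P = wI \<or> P = pI"
definition Sd :: "'s wterm \<Rightarrow> bool" where "Sd P \<longleftrightarrow> P = wd \<or> P = pd"
definition Se :: "'s wterm \<Rightarrow> bool" where "Se P \<longleftrightarrow> P = we \<or> P = pe"

lemma subst_wI[simp]: "subst {0} \<sigma> wI = wI" by (simp add: wI_def bd_def)
lemma subst_wd[simp]: "subst {0} \<sigma> wd = wd" by (simp add: wd_def bd_def)
lemma subst_we[simp]: "subst {0} \<sigma> we = we" by (simp add: we_def bd_def)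

lemma sort_base[simp]:
  "sortof Map.empty wI = Some (1,1)" "sortof Map.empty pI = Some (1,1)"
  "sortof Map.empty wd = Some (0,2)" "sortof Map.empty pd = Some (0,2)"
  "sortof Map.empty we = Some (2,0)" "sortof Map.empty pe = Some (2,0)"
  by (simp_all add: wI_def wd_def we_def pI_def pd_def pe_def)

lemma distinct_base[simp]:
  "wI \<noteq> pI" "wd \<noteq> pd" "we \<noteq> pe" "pI \<noteq> wI" "pd \<noteq> wd" "pe \<noteq> we"
  by (simp_all add: wI_def wd_def we_def pI_def pd_def pe_def)

lemma not_base[simp]:
  "Pref u v P \<noteq> wI" "Pref u v P \<noteq> wd" "Pref u v P \<noteq> we"
  "Seq A B \<noteq> wI" "Seq A B \<noteq> wd" "Seq A B \<noteq> we" "Seq A B \<noteq> pI" "Seq A B \<noteq> pd" "Seq A B \<noteq> pe"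
  "Ten A B \<noteq> wI" "Ten A B \<noteq> wd" "Ten A B \<noteq> we" "Ten A B \<noteq> pI" "Ten A B \<noteq> pd" "Ten A B \<noteq> pe"
  "Plus A B \<noteq> wI" "Plus A B \<noteq> wd" "Plus A B \<noteq> we" "Plus A B \<noteq> pI" "Plus A B \<noteq> pd" "Plus A B \<noteq> pe"
  "Mu Y t A \<noteq> pI" "Mu Y t A \<noteq> pd" "Mu Y t A \<noteq> pe"
  by (simp_all add: wI_def wd_def we_def pI_def pd_def pe_def)

lemma pref_eq:
  "Pref u v P = pI \<longleftrightarrow> u = [ALam 0] \<and> v = [ALam 0] \<and> P = wI"
  "Pref u v P = pd \<longleftrightarrow> u = [] \<and> v = [ALam 0, ALam 0] \<and> P = wd"
  "Pref u v P = pe \<longleftrightarrow> u = [ALam 0, ALam 0] \<and> v = [] \<and> P = we"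
  by (auto simp: pI_def pd_def pe_def)

lemma mu_eq:
  "Mu Y t P = wI \<Longrightarrow> substY Y (Mu Y t P) P = pI"
  "Mu Y t P = wd \<Longrightarrow> substY Y (Mu Y t P) P = pd"
  "Mu Y t P = we \<Longrightarrow> substY Y (Mu Y t P) P = pe"
  by (auto simp: wI_def wd_def we_def pI_def pd_def pe_def)

lemma base_inv:
  "wtrans P a b Q \<Longrightarrow>
    (SI P \<longrightarrow> SI Q \<and> (\<exists>x. a=[x] \<and> b=[x])) \<and>
    (Sd P \<longrightarrow> Sd Q \<and> a = [] \<and> (\<exists>x. b=[x,x])) \<and>
    (Se P \<longrightarrow> Se Q \<and> b = [] \<and> (\<exists>x. a=[x,x]))"
proof (induction rule: wtrans.induct)
  case (Refl P k l)
  then show ?case by (auto simp: SI_def Sd_def Se_def numeral_2_eq_2)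
next
  case (Pref u v P \<sigma>)
  then show ?case
    by (auto simp: SI_def Sd_def Se_def pref_eq bd_def simp del: subst.simps)
next
  case (Rec Y \<tau> P a b Q)
  have A: "SI (Mu Y \<tau> P) \<Longrightarrow> SI (substY Y (Mu Y \<tau> P) P)"
    by (metis SI_def mu_eq(1) not_base(22))
  have B: "Sd (Mu Y \<tau> P) \<Longrightarrow> Sd (substY Y (Mu Y \<tau> P) P)"
    by (metis Sd_def mu_eq(2) not_base(23))
  have C: "Se (Mu Y \<tau> P) \<Longrightarrow> Se (substY Y (Mu Y \<tau> P) P)"
    by (metis Se_def mu_eq(3) not_base(24))
  show ?case using A B C Rec.IH by blast
qed (auto simp: SI_def Sd_def Se_def)

definition SDI :: "'s wterm \<Rightarrow> bool" where "SDI P \<longleftrightarrow> (\<exists>A B. P = Ten A B \<and> Sd A \<and> SI B)"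
definition SIE :: "'s wterm \<Rightarrow> bool" where "SIE P \<longleftrightarrow> (\<exists>A B. P = Ten A B \<and> SI A \<and> Se B)"
definition SID :: "'s wterm \<Rightarrow> bool" where "SID P \<longleftrightarrow> (\<exists>A B. P = Ten A B \<and> SI A \<and> Sd B)"
definition SEI :: "'s wterm \<Rightarrow> bool" where "SEI P \<longleftrightarrow> (\<exists>A B. P = Ten A B \<and> Se A \<and> SI B)"

lemma sort_SI: "SI P \<Longrightarrow> sortof Map.empty P = Some (1,1)" by (auto simp: SI_def)
lemma sort_Sd: "Sd P \<Longrightarrow> sortof Map.empty P = Some (0,2)" by (auto simp: Sd_def)
lemma sort_Se: "Se P \<Longrightarrow> sortof Map.empty P = Some (2,0)" by (auto simp: Se_def)

lemma ten_inv:
  "wtrans P a b Q \<Longrightarrow>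
    (SDI P \<longrightarrow> SDI Q \<and> (\<exists>x y. a=[x] \<and> b=[y,y,x])) \<and>
    (SIE P \<longrightarrow> SIE Q \<and> (\<exists>x y. a=[x,y,y] \<and> b=[x])) \<and>
    (SID P \<longrightarrow> SID Q \<and> (\<exists>x y. a=[x] \<and> b=[x,y,y])) \<and>
    (SEI P \<longrightarrow> SEI Q \<and> (\<exists>x y. a=[y,y,x] \<and> b=[x]))"
proof (induction rule: wtrans.induct)
  case (Refl P k l)
  then show ?case
    by (auto simp: SDI_def SIE_def SID_def SEI_def numeral_2_eq_2 dest!: sort_SI sort_Sd sort_Se)
next
  case (Ten P a b Q R c d S)
  have h1: "SDI (Ten Q S) \<and> (\<exists>x y. a @ c = [x] \<and> b @ d = [y, y, x])" if "SDI (Ten P R)"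
  proof -
    from that have "Sd P" "SI R" by (auto simp: SDI_def)
    with base_inv[OF Ten.hyps(1)] base_inv[OF Ten.hyps(2)]
    show ?thesis
      by (auto simp: SDI_def)
  qed
  have h_SIE: "SIE (Ten Q S) \<and> (\<exists>x y. a @ c = [x, y, y] \<and> b @ d = [x])" if "SIE (Ten P R)"
  proof -
    from that have "SI P" "Se R" by (auto simp: SIE_def)
    with base_inv[OF Ten.hyps(1)] base_inv[OF Ten.hyps(2)]
    show ?thesis
      by (auto simp: SIE_def)
  qed
  have h_SID: "SID (Ten Q S) \<and> (\<exists>x y. a @ c = [x] \<and> b @ d = [x, y, y])" if "SID (Ten P R)"
  proof -
    from that have "SI P" "Sd R" by (auto simp: SID_def)
    with base_inv[OF Ten.hyps(1)] base_inv[OF Ten.hyps(2)]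
    show ?thesis
      by (auto simp: SID_def)
  qed
  have h_SEI: "SEI (Ten Q S) \<and> (\<exists>x y. a @ c = [y, y, x] \<and> b @ d = [x])" if "SEI (Ten P R)"
  proof -
    from that have "Se P" "SI R" by (auto simp: SEI_def)
    with base_inv[OF Ten.hyps(1)] base_inv[OF Ten.hyps(2)]
    show ?thesis
      by (auto simp: SEI_def)
  qed
  show ?case using h1 h_SIE h_SID h_SEI by blast
next
  case (IotaL P a0 b0 R a b Q)
  then show ?case by blast
next
  case (IotaR P a b R a0 b0 Q)
  then show ?case by blast
qed (auto simp: SDI_def SIE_def SID_def SEI_def)

definition SL :: "'s wterm \<Rightarrow> bool" where "SL P \<longleftrightarrow> (\<exists>A B. P = Seq A B \<and> SDI A \<and> SIE B)"
definition SR :: "'s wterm \<Rightarrow> bool" where "SR P \<longleftrightarrow> (\<exists>A B. P = Seq A B \<and> SID A \<and> SEI B)"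

lemma sort_SDI: "SDI P \<Longrightarrow> sortof Map.empty P = Some (1,3)" by (auto simp: SDI_def dest!: sort_SI sort_Sd)
lemma sort_SIE: "SIE P \<Longrightarrow> sortof Map.empty P = Some (3,1)" by (auto simp: SIE_def dest!: sort_SI sort_Se)
lemma sort_SID: "SID P \<Longrightarrow> sortof Map.empty P = Some (1,3)" by (auto simp: SID_def dest!: sort_SI sort_Sd)
lemma sort_SEI: "SEI P \<Longrightarrow> sortof Map.empty P = Some (3,1)" by (auto simp: SEI_def dest!: sort_SI sort_Se)

lemma seq_inv:
  "wtrans P a b Q \<Longrightarrow>
    (SL P \<longrightarrow> SL Q \<and> (\<exists>x. a=[x] \<and> b=[x])) \<and>
    (SR P \<longrightarrow> SR Q \<and> (\<exists>x. a=[x] \<and> b=[x]))"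
proof (induction rule: wtrans.induct)
  case (Refl P k l)
  then show ?case
    by (auto simp: SL_def SR_def dest!: sort_SDI sort_SIE sort_SID sort_SEI)
next
  case (Cut P a c Q R b S)
  have h1: "SL (Seq Q S) \<and> (\<exists>x. a = [x] \<and> b = [x])" if "SL (Seq P R)"
  proof -
    from that have "SDI P" "SIE R" by (auto simp: SL_def)
    with ten_inv[OF Cut.hyps(1)] ten_inv[OF Cut.hyps(2)]
    show ?thesis
      by (auto simp: SL_def)
  qed
  have h2: "SR (Seq Q S) \<and> (\<exists>x. a = [x] \<and> b = [x])" if "SR (Seq P R)"
  proof -
    from that have "SID P" "SEI R" by (auto simp: SR_def)
    with ten_inv[OF Cut.hyps(1)] ten_inv[OF Cut.hyps(2)]
    show ?thesis
      by (auto simp: SR_def)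
  qed
  show ?case using h1 h2 by blast
next
  case (IotaL P a0 b0 R a b Q)
  then show ?case by blast
next
  case (IotaR P a b R a0 b0 Q)
  then show ?case by blast
qed (auto simp: SL_def SR_def)

lemma stepI: "SI P \<Longrightarrow> wtrans P [x] [x] wI"
proof -
  have p: "wtrans pI [x] [x] wI"
    using wtrans.Pref[of "[ALam 0]" "[ALam 0]" wI "\<lambda>_. x"] by (simp add: pI_def bd_def)
  have eq: "substY 0 (Mu 0 (1,1) (Pref [ALam 0] [ALam 0] (TVar 0))) (Pref [ALam 0] [ALam 0] (TVar 0)) = pI"
    by (simp add: pI_def wI_def)
  have "wtrans (Mu 0 (1,1) (Pref [ALam 0] [ALam 0] (TVar 0))) [x] [x] wI"
    by (rule wtrans.Rec, simp only: eq, rule p)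
  then have "wtrans wI [x] [x] wI" by (simp only: wI_def[symmetric])
  then show "SI P \<Longrightarrow> wtrans P [x] [x] wI" using p by (auto simp: SI_def)
qed

lemma stepd: "Sd P \<Longrightarrow> wtrans P [] [x,x] wd"
proof -
  have p: "wtrans pd [] [x,x] wd"
    using wtrans.Pref[of "[]" "[ALam 0, ALam 0]" wd "\<lambda>_. x"] by (simp add: pd_def bd_def)
  have eq: "substY 0 (Mu 0 (0,2) (Pref [] [ALam 0, ALam 0] (TVar 0))) (Pref [] [ALam 0, ALam 0] (TVar 0)) = pd"
    by (simp add: pd_def wd_def)
  have "wtrans (Mu 0 (0,2) (Pref [] [ALam 0, ALam 0] (TVar 0))) [] [x,x] wd"
    by (rule wtrans.Rec, simp only: eq, rule p)
  then have "wtrans wd [] [x,x] wd" by (simp only: wd_def[symmetric])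
  then show "Sd P \<Longrightarrow> wtrans P [] [x,x] wd" using p by (auto simp: Sd_def)
qed

lemma stepe: "Se P \<Longrightarrow> wtrans P [x,x] [] we"
proof -
  have p: "wtrans pe [x,x] [] we"
    using wtrans.Pref[of "[ALam 0, ALam 0]" "[]" we "\<lambda>_. x"] by (simp add: pe_def bd_def)
  have eq: "substY 0 (Mu 0 (2,0) (Pref [ALam 0, ALam 0] [] (TVar 0))) (Pref [ALam 0, ALam 0] [] (TVar 0)) = pe"
    by (simp add: pe_def we_def)
  have "wtrans (Mu 0 (2,0) (Pref [ALam 0, ALam 0] [] (TVar 0))) [x,x] [] we"
    by (rule wtrans.Rec, simp only: eq, rule p)
  then have "wtrans we [x,x] [] we" by (simp only: we_def[symmetric])
  then show "Se P \<Longrightarrow> wtrans P [x,x] [] we" using p by (auto simp: Se_def)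
qed

lemma stepL: "SL P \<Longrightarrow> \<exists>P'. wtrans P [x] [x] P' \<and> SL P'"
proof -
  assume "SL P"
  then obtain A B C E where P: "P = Seq (Ten A B) (Ten C E)" "Sd A" "SI B" "SI C" "Se E"
    by (auto simp: SL_def SDI_def SIE_def)
  have t1: "wtrans (Ten A B) ([] @ [x]) ([x,x] @ [x]) (Ten wd wI)"
    by (rule wtrans.Ten[OF stepd[OF P(2)] stepI[OF P(3)]])
  have t2: "wtrans (Ten C E) ([x] @ [x,x]) ([x] @ []) (Ten wI we)"
    by (rule wtrans.Ten[OF stepI[OF P(4)] stepe[OF P(5)]])
  have "wtrans P [x] [x] (Seq (Ten wd wI) (Ten wI we))"
    using wtrans.Cut[OF t1[simplified] t2[simplified]] P(1) by simp
  moreover have "SL (Seq (Ten (wd::'a wterm) wI) (Ten wI we))"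
    by (auto simp: SL_def SDI_def SIE_def SI_def Sd_def Se_def)
  ultimately show ?thesis by blast
qed

lemma stepR: "SR P \<Longrightarrow> \<exists>P'. wtrans P [x] [x] P' \<and> SR P'"
proof -
  assume "SR P"
  then obtain A B C E where P: "P = Seq (Ten A B) (Ten C E)" "SI A" "Sd B" "Se C" "SI E"
    by (auto simp: SR_def SID_def SEI_def)
  have t1: "wtrans (Ten A B) ([x] @ []) ([x] @ [x,x]) (Ten wI wd)"
    by (rule wtrans.Ten[OF stepI[OF P(2)] stepd[OF P(3)]])
  have t2: "wtrans (Ten C E) ([x,x] @ [x]) ([] @ [x]) (Ten we wI)"
    by (rule wtrans.Ten[OF stepe[OF P(4)] stepI[OF P(5)]])
  have "wtrans P [x] [x] (Seq (Ten wI wd) (Ten we wI))"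
    using wtrans.Cut[OF t1[simplified] t2[simplified]] P(1) by simp
  moreover have "SR (Seq (Ten (wI::'a wterm) wd) (Ten we wI))"
    by (auto simp: SR_def SID_def SEI_def SI_def Sd_def Se_def)
  ultimately show ?thesis by blast
qed

lemma SI_wI: "SI wI" by (simp add: SI_def)

lemma bisimL: "is_bisim {(P, Q). SL P \<and> SI (Q::'s wterm)}"
  unfolding is_bisim_def
proof (intro allI impI conjI)
  fix P Q :: "'s wterm" and a b :: "'s lab list" and P' :: "'s wterm"
  assume h: "(P, Q) \<in> {(P, Q). SL P \<and> SI Q}" "wtrans P a b P'"
  then obtain x where "SL P'" "a=[x]" "b=[x]" using seq_inv[OF h(2)] by blast
  moreover have "wtrans Q [x] [x] wI" using h(1) stepI by blast
  ultimately show "\<exists>Q'. wtrans Q a b Q' \<and> (P', Q') \<in> {(P, Q). SL P \<and> SI Q}"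
    using SI_wI by blast
next
  fix P Q :: "'s wterm" and a b :: "'s lab list" and Q' :: "'s wterm"
  assume h: "(P, Q) \<in> {(P, Q). SL P \<and> SI Q}" "wtrans Q a b Q'"
  then obtain x where "SI Q'" "a=[x]" "b=[x]" using base_inv[OF h(2)] by blast
  moreover obtain P' where "wtrans P [x] [x] P'" "SL P'" using h(1) stepL by blast
  ultimately show "\<exists>P'. wtrans P a b P' \<and> (P', Q') \<in> {(P, Q). SL P \<and> SI Q}"
    by blast
qed

lemma bisimR: "is_bisim {(Q, P). SR P \<and> SI (Q::'s wterm)}"
  unfolding is_bisim_def
proof (intro allI impI conjI)
  fix P Q :: "'s wterm" and a b :: "'s lab list" and Q' :: "'s wterm"
  assume h: "(Q, P) \<in> {(Q, P). SR P \<and> SI Q}" "wtrans P a b Q'"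
  then obtain x where "SR Q'" "a=[x]" "b=[x]" using seq_inv[OF h(2)] by blast
  moreover have "wtrans Q [x] [x] wI" using h(1) stepI by blast
  ultimately show "\<exists>P'. wtrans Q a b P' \<and> (P', Q') \<in> {(Q, P). SR P \<and> SI Q}"
    using SI_wI by blast
next
  fix P Q :: "'s wterm" and a b :: "'s lab list" and Q' :: "'s wterm"
  assume h: "(Q, P) \<in> {(Q, P). SR P \<and> SI Q}" "wtrans Q a b Q'"
  then obtain x where "SI Q'" "a=[x]" "b=[x]" using base_inv[OF h(2)] by blast
  moreover obtain P' where "wtrans P [x] [x] P'" "SR P'" using h(1) stepR by blast
  ultimately show "\<exists>P'. wtrans P a b P' \<and> (Q', P') \<in> {(Q, P). SR P \<and> SI Q}"
    by blast
qed

theorem mainTheorem4: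
  shows "Seq (Ten (wd :: 's wterm) wI) (Ten wI we) \<approx>w wI \<and>
         (wI :: 's wterm) \<approx>w Seq (Ten wI wd) (Ten we wI)"
  unfolding bisimilar_def
proof
  show "\<exists>S. is_bisim S \<and> (Seq (Ten (wd :: 's wterm) wI) (Ten wI we), wI) \<in> S"
  proof -
    have "SL (Seq (Ten (wd :: 's wterm) wI) (Ten wI we))"
      by (auto simp: SL_def SDI_def SIE_def SI_def Sd_def Se_def)
    then show ?thesis using bisimL SI_wI by blast
  qed
  show "\<exists>S. is_bisim S \<and> ((wI :: 's wterm), Seq (Ten wI wd) (Ten we wI)) \<in> S"
  proof -
    have "SR (Seq (Ten (wI :: 's wterm) wd) (Ten we wI))"
      by (auto simp: SR_def SID_def SEI_def SI_def Sd_def Se_def)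
    then show ?thesis using bisimR SI_wI by blast
  qed
qed

end
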